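(* Let $\lambda\in\mathbb R$ with $\alpha=1-\lambda>0$, and let $\mathcal Q_\lambda$ be a $\lambda$-exponential family satisfying Assumptions A and B. Let $x_1,\dots,x_N\in\mathcal X$ satisfy $x_i\in S_\vartheta$ for all $i$ and all $\vartheta\in\operatorname{dom}\varphi_\lambda$. Let $\tau>0$, $\vartheta'\in\operatorname{dom}\varphi_\lambda$, and suppose $\vartheta_P\in\operatorname{dom}\varphi_\lambda$ satisfies $$q^{(\alpha)}_{\vartheta_P}(T)=M:=\frac{N\tau}{1+N\tau}\cdot\frac1N\sum_{i=1}^NT(x_i)+\frac1{1+N\tau}q^{(\alpha)}_{\vartheta'}(T).$$ Consider the proximal loss $L(\vartheta)=-\sum_{i=1}^N\log q_\vartheta(x_i)+\frac1\tau RD_\alpha(q_{\vartheta'},q_\vartheta)$ on $\operatorname{dom}\varphi_\lambda$. (i) If $\lambda=0$, $\vartheta_P$ minimizes $L$ over $\operatorname{dom}\varphi_\lambda$, i.e. $\vartheta_P\in\operatorname{prox}_\tau^{-\sum_i\log q_\cdot(x_i)}(\vartheta')$. (ii) If $\lambda<0$ (resp. $\lambda>0$), $\vartheta_P$ minimizes over $\operatorname{dom}\varphi_\lambda$ the function $U(\vartheta)=\frac{1+N\tau}{\tau}\big(\varphi_\lambda(\vartheta)-c_\lambda(\vartheta,M)\big)+\frac1\tau\psi_\lambda(\vartheta')$, which is an upper bound (resp. lower bound) of $L$ on $\operatorname{dom}\varphi_\lambda$.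
   Context: $\mathcal H$ is a finite-dimensional real Hilbert space; $\mathcal X$ a measurable space with measure $m$; $p(f)=\int fp\,dm$. Conventions $\log s=-\infty$ for $s\le0$, $\exp(-\infty)=0$. Coupling $c_\lambda(u,v)=\frac1\lambda\log(1+\lambda\langle u,v\rangle)$ ($\lambda\ne0$), $c_0=\langle\cdot,\cdot\rangle$. For measurable $T:\mathcal X\to\mathcal H$: $\varphi_\lambda(\vartheta)=\log\int\exp(c_\lambda(\vartheta,T))dm$, $\operatorname{dom}\varphi_\lambda=\{\varphi_\lambda<+\infty\}$, $q_\vartheta=\exp(c_\lambda(\vartheta,T)-\varphi_\lambda(\vartheta))$, $\mathcal Q_\lambda=\{q_\vartheta:\vartheta\in\operatorname{dom}\varphi_\lambda\}$, support $S_\vartheta=\{x:1+\lambda\langle\vartheta,T(x)\rangle>0\}$. Escort $p^{(\alpha)}=p^\alpha/\int p^\alpha dm$; $p_{|Y}=p\mathbf 1_Y$. Rényi entropy $H_\alpha(p)=\frac1{1-\alpha}\log\int p^\alpha dm$ ($\alpha\ne1$), $H_1(p)=-\int p\log p\,dm$; $\psi_\lambda(\vartheta)=-H_\alpha(q_\vartheta)$. Rényi divergence $RD_\alpha(p_1,p_2)=\frac1{\alpha-1}\log\int p_1^\alpha p_2^{1-\alpha}dm$ ($\alpha\ne1$), $RD_1=KL$. Rényi proximal operator $\operatorname{prox}^f_\tau(\vartheta')=\arg\min_{\vartheta\in\operatorname{dom}\varphi_\lambda}f(\vartheta)+\frac1\tau RD_\alpha(q_{\vartheta'},q_\vartheta)$.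 Compatibility: $p$ is $q_\vartheta$-compatible if $\int p_{|S_\vartheta}^\alpha dm\in(0,\infty)$ and $\int Tp_{|S_\vartheta}^\alpha dm$ has finite components; $\mathcal Q_\lambda$-compatible if for every $\vartheta$. Assumption A: $\alpha>0$ and $\varphi_\lambda$ proper (never $-\infty$, nonempty domain). Assumption B: there is a nonempty $S_\lambda$ with $S_\vartheta=S_\lambda$ for all $\vartheta\in\operatorname{dom}\varphi_\lambda$, and each $q_\vartheta\in\mathcal Q_\lambda$ is $\mathcal Q_\lambda$-compatible. *)

theory Defs
  imports "HOL-Analysis.Analysis"
begin

definition elog :: "real \<Rightarrow> ereal" where
  "elog s = (if s > 0 then ereal (ln s) else -\<infinity>)"

definition elog_enn :: "ennreal \<Rightarrow> ereal" where
  "elog_enn z = (if z = 0 then -\<infinity> else if z = top then \<infinity> else ereal (ln (enn2real z)))"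

definition clam :: "real \<Rightarrow> 'h::euclidean_space \<Rightarrow> 'h \<Rightarrow> ereal" where
  "clam l u v = (if l = 0 then ereal (u \<bullet> v) else ereal (1 / l) * elog (1 + l * (u \<bullet> v)))"

definition expc :: "real \<Rightarrow> 'h::euclidean_space \<Rightarrow> 'h \<Rightarrow> real" where
  "expc l u v = (if 1 + l * (u \<bullet> v) > 0 then exp (real_of_ereal (clam l u v)) else 0)"

definition Zlam :: "'x measure \<Rightarrow> ('x \<Rightarrow> 'h::euclidean_space) \<Rightarrow> real \<Rightarrow> 'h \<Rightarrow> ennreal" where
  "Zlam m T l \<theta> = (\<integral>\<^sup>+ x. ennreal (expc l \<theta> (T x)) \<partial>m)"

definition philam :: "'x measure \<Rightarrow> ('x \<Rightarrow> 'h::euclidean_space) \<Rightarrow> real \<Rightarrow> 'h \<Rightarrow> ereal" where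
  "philam m T l \<theta> = elog_enn (Zlam m T l \<theta>)"

definition dom_phi :: "'x measure \<Rightarrow> ('x \<Rightarrow> 'h::euclidean_space) \<Rightarrow> real \<Rightarrow> 'h set" where
  "dom_phi m T l = {\<theta>. philam m T l \<theta> < \<infinity>}"

text \<open>Density q_theta = exp(c_lambda(theta,T) - phi_lambda(theta)) (used for theta in the domain).\<close>
definition qlam :: "'x measure \<Rightarrow> ('x \<Rightarrow> 'h::euclidean_space) \<Rightarrow> real \<Rightarrow> 'h \<Rightarrow> 'x \<Rightarrow> real" where
  "qlam m T l \<theta> x = expc l \<theta> (T x) * exp (- real_of_ereal (philam m T l \<theta>))"

definition supp :: "'x measure \<Rightarrow> ('x \<Rightarrow> 'h::euclidean_space) \<Rightarrow> real \<Rightarrow> 'h \<Rightarrow> 'x set" where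
  "supp m T l \<theta> = {x \<in> space m. 1 + l * (\<theta> \<bullet> T x) > 0}"

definition expect :: "'x measure \<Rightarrow> ('x \<Rightarrow> real) \<Rightarrow> ('x \<Rightarrow> 'b::{banach,second_countable_topology}) \<Rightarrow> 'b" where
  "expect m p f = (\<integral> x. p x *\<^sub>R f x \<partial>m)"

definition escort :: "'x measure \<Rightarrow> real \<Rightarrow> ('x \<Rightarrow> real) \<Rightarrow> 'x \<Rightarrow> real" where
  "escort m \<alpha> p x = p x powr \<alpha> / (\<integral> y. p y powr \<alpha> \<partial>m)"

definition compatible :: "'x measure \<Rightarrow> ('x \<Rightarrow> 'h::euclidean_space) \<Rightarrow> real \<Rightarrow> real \<Rightarrow> ('x \<Rightarrow> real) \<Rightarrow> 'h \<Rightarrow> bool" where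
  "compatible m T l \<alpha> p \<theta> \<longleftrightarrow>
     (let S = supp m T l \<theta> in
       (\<integral>\<^sup>+ x. ennreal ((p x * indicator S x) powr \<alpha>) \<partial>m) \<in> {0<..<top} \<and>
       integrable m (\<lambda>x. (p x * indicator S x) powr \<alpha> *\<^sub>R T x))"

definition renyi_entropy :: "'x measure \<Rightarrow> real \<Rightarrow> ('x \<Rightarrow> real) \<Rightarrow> real" where
  "renyi_entropy m \<alpha> p =
     (if \<alpha> = 1 then - (\<integral> x. p x * ln (p x) \<partial>m)
      else 1 / (1 - \<alpha>) * ln (\<integral> x. p x powr \<alpha> \<partial>m))"

definition psilam :: "'x measure \<Rightarrow> ('x \<Rightarrow> 'h::euclidean_space) \<Rightarrow> real \<Rightarrow> 'h \<Rightarrow> real" where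
  "psilam m T l \<theta> = - renyi_entropy m (1 - l) (qlam m T l \<theta>)"

definition KL :: "'x measure \<Rightarrow> ('x \<Rightarrow> real) \<Rightarrow> ('x \<Rightarrow> real) \<Rightarrow> ereal" where
  "KL m p1 p2 = ereal (\<integral> x. (if p1 x > 0 then p1 x * ln (p1 x / p2 x) else 0) \<partial>m)"

definition renyi_div :: "'x measure \<Rightarrow> real \<Rightarrow> ('x \<Rightarrow> real) \<Rightarrow> ('x \<Rightarrow> real) \<Rightarrow> ereal" where
  "renyi_div m \<alpha> p1 p2 =
     (if \<alpha> = 1 then KL m p1 p2
      else ereal (1 / (\<alpha> - 1)) *
             elog_enn (\<integral>\<^sup>+ x. ennreal (p1 x powr \<alpha> * p2 x powr (1 - \<alpha>)) \<partial>m))"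

definition prox :: "'x measure \<Rightarrow> ('x \<Rightarrow> 'h::euclidean_space) \<Rightarrow> real \<Rightarrow> ('h \<Rightarrow> ereal) \<Rightarrow> real \<Rightarrow> 'h \<Rightarrow> 'h set" where
  "prox m T l f \<tau> \<theta>' =
     {\<theta> \<in> dom_phi m T l. \<forall>\<eta> \<in> dom_phi m T l.
        f \<theta> + ereal (1 / \<tau>) * renyi_div m (1 - l) (qlam m T l \<theta>') (qlam m T l \<theta>)
        \<le> f \<eta> + ereal (1 / \<tau>) * renyi_div m (1 - l) (qlam m T l \<theta>') (qlam m T l \<eta>)}"

definition assumption_A :: "'x measure \<Rightarrow> ('x \<Rightarrow> 'h::euclidean_space) \<Rightarrow> real \<Rightarrow> bool" where
  "assumption_A m T l \<longleftrightarrow> 1 - l > 0 \<and> (\<forall>\<theta>. philam m T l \<theta> \<noteq> -\<infinity>) \<and> dom_phi m T l \<noteq> {}"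

definition assumption_B :: "'x measure \<Rightarrow> ('x \<Rightarrow> 'h::euclidean_space) \<Rightarrow> real \<Rightarrow> bool" where
  "assumption_B m T l \<longleftrightarrow>
     (\<exists>S. S \<noteq> {} \<and> (\<forall>\<theta> \<in> dom_phi m T l. supp m T l \<theta> = S)) \<and>
     (\<forall>\<theta> \<in> dom_phi m T l. \<forall>\<eta> \<in> dom_phi m T l. compatible m T l (1 - l) (qlam m T l \<theta>) \<eta>)"

end

theory Submission imports Defs begin

definition cf :: "real \<Rightarrow> 'h::euclidean_space \<Rightarrow> 'h \<Rightarrow> real" where
  "cf l u v = (if l = 0 then u \<bullet> v else ln (1 + l * (u \<bullet> v)) / l)"

lemma expc_eq: "expc l u v = (if 1 + l * (u \<bullet> v) > 0 then exp (cf l u v) else 0)"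
  by (auto simp: expc_def clam_def cf_def elog_def)

lemma clam_eq: "1 + l * (u \<bullet> v) > 0 \<Longrightarrow> clam l u v = ereal (cf l u v)"
  by (auto simp: clam_def cf_def elog_def)

lemma jensen_ln:
  fixes y :: "nat \<Rightarrow> real" and N :: nat
  assumes "\<tau> > 0" "\<And>i. i < N \<Longrightarrow> y i > 0" "y0 > 0"
    and Y: "Y = (\<tau> * (\<Sum>i<N. y i) + y0) / (1 + real N * \<tau>)"
  shows "\<tau> * (\<Sum>i<N. ln (y i)) + ln y0 \<le> (1 + real N * \<tau>) * ln Y"
proof -
  have d: "1 + real N * \<tau> > 0" using assms(1) by (simp add: add_pos_nonneg)
  have "(\<Sum>i<N. y i) \<ge> 0" using assms(2) by (intro sum_nonneg) (simp add: less_imp_le)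
  then have Ypos: "Y > 0" using assms d unfolding Y by (intro divide_pos_pos) (auto intro: add_nonneg_pos)
  have k: "ln z \<le> ln Y + z / Y - 1" if "z > 0" for z
  proof -
    have "ln (z / Y) \<le> z / Y - 1" using that Ypos by (intro ln_le_minus_one) simp
    then show ?thesis using that Ypos by (simp add: ln_div)
  qed
  have "(\<Sum>i<N. ln (y i)) \<le> (\<Sum>i<N. ln Y + y i / Y - 1)"
    using k assms(2) by (intro sum_mono) auto
  also have "\<dots> = real N * ln Y + (\<Sum>i<N. y i) / Y - real N"
    by (simp add: sum.distrib sum_subtractf sum_divide_distrib)
  finally have s: "(\<Sum>i<N. ln (y i)) \<le> real N * ln Y + (\<Sum>i<N. y i) / Y - real N" .
  have "\<tau> * (\<Sum>i<N. ln (y i)) + ln y0 \<le> \<tau> * (real N * ln Y + (\<Sum>i<N. y i) / Y - real N) + (ln Y + y0 / Y - 1)"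
    using s k[OF assms(3)] assms(1) by (intro add_mono mult_left_mono) auto
  also have "\<dots> = (1 + real N * \<tau>) * ln Y + ((\<tau> * (\<Sum>i<N. y i) + y0) / Y - (1 + real N * \<tau>))"
    using Ypos by (simp add: field_simps)
  also have "(\<tau> * (\<Sum>i<N. y i) + y0) / Y = 1 + real N * \<tau>"
    using d Ypos unfolding Y by (simp add: field_simps)
  finally show ?thesis by simp
qed

locale PS =
  fixes m :: "'x measure" and T :: "'x \<Rightarrow> 'h::euclidean_space" and l :: real and S :: "'x set"
  assumes T_meas[measurable]: "T \<in> borel_measurable m"
   and A: "assumption_A m T l" and B: "assumption_B m T l"
   and S: "\<And>\<theta>. \<theta> \<in> dom_phi m T l \<Longrightarrow> supp m T l \<theta> = S"
begin

abbreviation "D \<equiv> dom_phi m T l"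
abbreviation "al \<equiv> 1 - l"
definition "Zr \<theta> = enn2real (Zlam m T l \<theta>)"
abbreviation "q \<equiv> qlam m T l"
definition "Aa a = (\<integral>x. q a x powr al \<partial>m)"
definition "Ba a = (\<integral>x. q a x powr al *\<^sub>R T x \<partial>m)"
definition "Ea a = expect m (escort m al (q a)) T"

lemma al_pos: "al > 0" using A by (simp add: assumption_A_def)

lemma Z_fin: assumes "\<theta> \<in> D" shows "Zlam m T l \<theta> \<noteq> top" "Zlam m T l \<theta> \<noteq> 0"
  using assms A by (auto simp: dom_phi_def philam_def elog_enn_def assumption_A_def split: if_splits)

lemma Zr_pos: "\<theta> \<in> D \<Longrightarrow> Zr \<theta> > 0"
  using Z_fin[of \<theta>] by (auto simp: Zr_def enn2real_positive_iff top.not_eq_extremum zero_less_iff_neq_zero)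

lemma philam_eq: "\<theta> \<in> D \<Longrightarrow> philam m T l \<theta> = ereal (ln (Zr \<theta>))"
  using Z_fin[of \<theta>] by (simp add: philam_def elog_enn_def Zr_def)

lemma expc_meas[measurable]: "(\<lambda>x. expc l \<theta> (T x)) \<in> borel_measurable m"
  unfolding expc_eq cf_def by measurable

lemma q_meas[measurable]: "q \<theta> \<in> borel_measurable m"
  unfolding qlam_def[abs_def] by measurable

lemma inS: "\<theta> \<in> D \<Longrightarrow> x \<in> space m \<Longrightarrow> x \<in> S \<longleftrightarrow> 1 + l * (\<theta> \<bullet> T x) > 0"
  using S[of \<theta>] by (auto simp: supp_def)

lemma q_eq: assumes "\<theta> \<in> D" "x \<in> space m"
  shows "q \<theta> x = (if x \<in> S then exp (cf l \<theta> (T x) - ln (Zr \<theta>)) else 0)"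
  using inS[OF assms] philam_eq[OF assms(1)]
  by (simp add: qlam_def expc_eq exp_diff exp_minus field_simps)

lemma q_nonneg: "q \<theta> x \<ge> 0"
  by (simp add: qlam_def expc_def)

lemma expc_nonneg: "expc l' u v \<ge> 0" by (simp add: expc_def)

lemma expc_int: assumes "\<theta> \<in> D"
  shows "integrable m (\<lambda>x. expc l \<theta> (T x))" "(\<integral>x. expc l \<theta> (T x) \<partial>m) = Zr \<theta>"
proof -
  show i: "integrable m (\<lambda>x. expc l \<theta> (T x))"
    using Z_fin(1)[OF assms] by (intro integrableI_nonneg) (auto simp: Zlam_def top.not_eq_extremum expc_nonneg)
  show "(\<integral>x. expc l \<theta> (T x) \<partial>m) = Zr \<theta>"
    unfolding Zr_def Zlam_def by (subst integral_eq_nn_integral) (auto simp: expc_nonneg)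
qed

lemma q_int: assumes "\<theta> \<in> D" shows "integrable m (q \<theta>)" "(\<integral>x. q \<theta> x \<partial>m) = 1"
proof -
  have e: "q \<theta> = (\<lambda>x. expc l \<theta> (T x) / Zr \<theta>)"
    using philam_eq[OF assms] by (auto simp: qlam_def exp_minus field_simps Zr_pos[OF assms] fun_eq_iff)
  show "integrable m (q \<theta>)" unfolding e using expc_int[OF assms] by simp
  show "(\<integral>x. q \<theta> x \<partial>m) = 1" unfolding e using expc_int[OF assms] Zr_pos[OF assms] by simp
qed

lemma q_ind: "a \<in> D \<Longrightarrow> x \<in> space m \<Longrightarrow> q a x * indicator S x = q a x"
  using q_eq[of a x] by (auto simp: indicator_def)

lemma compat: assumes "a \<in> D"
  shows "(\<integral>\<^sup>+ x. ennreal (q a x powr al) \<partial>m) \<in> {0<..<top}"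
        "integrable m (\<lambda>x. q a x powr al *\<^sub>R T x)"
proof -
  have c: "compatible m T l al (q a) a" using B assms by (auto simp: assumption_B_def)
  have e1: "(\<integral>\<^sup>+ x. ennreal ((q a x * indicator S x) powr al) \<partial>m) = (\<integral>\<^sup>+ x. ennreal (q a x powr al) \<partial>m)"
    by (rule nn_integral_cong) (simp add: q_ind[OF assms])
  show "(\<integral>\<^sup>+ x. ennreal (q a x powr al) \<partial>m) \<in> {0<..<top}"
    using c e1 S[OF assms] by (simp add: compatible_def Let_def)
  have "integrable m (\<lambda>x. (q a x * indicator S x) powr al *\<^sub>R T x)"
    using c S[OF assms] by (simp add: compatible_def Let_def)
  moreover have "integrable m (\<lambda>x. (q a x * indicator S x) powr al *\<^sub>R T x) = integrable m (\<lambda>x. q a x powr al *\<^sub>R T x)"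
    by (intro Bochner_Integration.integrable_cong[OF refl]) (simp only: q_ind[OF assms])
  ultimately show "integrable m (\<lambda>x. q a x powr al *\<^sub>R T x)" by simp
qed

lemma pow_int: assumes "a \<in> D"
  shows "integrable m (\<lambda>x. q a x powr al)" "Aa a > 0"
proof -
  have f: "(\<integral>\<^sup>+ x. ennreal (q a x powr al) \<partial>m) < top" "(\<integral>\<^sup>+ x. ennreal (q a x powr al) \<partial>m) > 0"
    using compat(1)[OF assms] by auto
  show i: "integrable m (\<lambda>x. q a x powr al)"
    using f by (intro integrableI_nonneg) auto
  have "Aa a = enn2real (\<integral>\<^sup>+ x. ennreal (q a x powr al) \<partial>m)"
    unfolding Aa_def by (rule integral_eq_nn_integral) auto
  then show "Aa a > 0" using f by (simp add: enn2real_positive_iff)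
qed

lemma Ea_eq: assumes "a \<in> D" shows "Ea a = (1 / Aa a) *\<^sub>R Ba a"
proof -
  have "Ea a = (\<integral>x. (1 / Aa a) *\<^sub>R (q a x powr al *\<^sub>R T x) \<partial>m)"
    unfolding Ea_def expect_def escort_def Aa_def[symmetric] by (intro Bochner_Integration.integral_cong[OF refl]) simp
  also have "\<dots> = (1 / Aa a) *\<^sub>R Ba a" unfolding Ba_def by (rule integral_scaleR_right)
  finally show ?thesis .
qed

definition "fa a \<theta> x = q a x powr al + l * (\<theta> \<bullet> (q a x powr al *\<^sub>R T x))"

lemma fa_alt: "fa a \<theta> x = q a x powr al * (1 + l * (\<theta> \<bullet> T x))"
  by (simp add: fa_def algebra_simps)

lemma fa_int: assumes "a \<in> D" shows "integrable m (fa a \<theta>)"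
  "(\<integral>x. fa a \<theta> x \<partial>m) = Aa a * (1 + l * (\<theta> \<bullet> Ea a))"
proof -
  show "integrable m (fa a \<theta>)" unfolding fa_def[abs_def]
    using pow_int(1)[OF assms] compat(2)[OF assms]
    by (intro Bochner_Integration.integrable_add integrable_mult_right integrable_inner_right)
  have "(\<integral>x. fa a \<theta> x \<partial>m) = Aa a + l * (\<theta> \<bullet> Ba a)"
  proof -
    have i2: "integrable m (\<lambda>x. l * (\<theta> \<bullet> (q a x powr al *\<^sub>R T x)))"
      using compat(2)[OF assms] by (intro integrable_mult_right integrable_inner_right)
    show ?thesis unfolding fa_def[abs_def] Aa_def Ba_def
      by (simp only: Bochner_Integration.integral_add[OF pow_int(1)[OF assms] i2] integral_mult_right_zero
           integral_inner_right[OF compat(2)[OF assms]])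
  qed
  also have "\<dots> = Aa a * (1 + l * (\<theta> \<bullet> Ea a))"
    using Ea_eq[OF assms] pow_int(2)[OF assms] by (simp add: algebra_simps)
  finally show "(\<integral>x. fa a \<theta> x \<partial>m) = Aa a * (1 + l * (\<theta> \<bullet> Ea a))" .
qed

lemma fa_nonneg: assumes "a \<in> D" "\<theta> \<in> D" "x \<in> space m" shows "fa a \<theta> x \<ge> 0"
  using inS[OF assms(2,3)] q_eq[OF assms(1,3)] by (auto simp: fa_alt)

lemma Ea_pos: assumes "a \<in> D" "\<theta> \<in> D" shows "1 + l * (\<theta> \<bullet> Ea a) > 0"
proof (rule ccontr)
  assume "\<not> ?thesis"
  then have "(\<integral>x. fa a \<theta> x \<partial>m) \<le> 0"
    using fa_int(2)[OF assms(1), of \<theta>] pow_int(2)[OF assms(1)] by (simp add: mult_nonneg_nonpos)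
  moreover have "(\<integral>x. fa a \<theta> x \<partial>m) \<ge> 0"
    using fa_nonneg[OF assms] by (intro integral_nonneg_AE) auto
  ultimately have "(\<integral>x. fa a \<theta> x \<partial>m) = 0" by simp
  then have "AE x in m. fa a \<theta> x = 0"
    using integral_nonneg_eq_0_iff_AE[OF fa_int(1)[OF assms(1)]] fa_nonneg[OF assms] by auto
  then have "AE x in m. q a x powr al = 0"
  proof (rule AE_mp[OF _ AE_I2], intro impI)
    fix x assume x: "x \<in> space m" "fa a \<theta> x = 0"
    show "q a x powr al = 0"
      using x inS[OF assms(2) x(1)] q_eq[OF assms(1) x(1)] by (auto simp: fa_alt)
  qed
  then have "Aa a = 0" unfolding Aa_def by (simp add: integral_eq_zero_AE)
  then show False using pow_int(2)[OF assms(1)] by simp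
qed

lemma prod_eq: assumes "l \<noteq> 0" "a \<in> D" "\<theta> \<in> D" "x \<in> space m"
  shows "q a x powr al * q \<theta> x powr l = exp (- l * ln (Zr \<theta>)) * fa a \<theta> x"
proof (cases "x \<in> S")
  case True
  then have p: "1 + l * (\<theta> \<bullet> T x) > 0" using inS[OF assms(3,4)] by simp
  have "q \<theta> x powr l = exp (l * (cf l \<theta> (T x) - ln (Zr \<theta>)))"
    using q_eq[OF assms(3,4)] True by (simp add: powr_def)
  also have "\<dots> = exp (ln (1 + l * (\<theta> \<bullet> T x)) - l * ln (Zr \<theta>))"
    using assms(1) by (simp add: cf_def algebra_simps)
  also have "\<dots> = (1 + l * (\<theta> \<bullet> T x)) * exp (- l * ln (Zr \<theta>))"
    using p by (simp add: exp_diff exp_minus field_simps)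
  finally show ?thesis by (simp add: fa_alt)
next
  case False
  then show ?thesis using q_eq[OF assms(2,4)] by (simp add: fa_alt)
qed

lemma prod_int: assumes "l \<noteq> 0" "a \<in> D" "\<theta> \<in> D"
  shows "integrable m (\<lambda>x. q a x powr al * q \<theta> x powr l)"
    "(\<integral>x. q a x powr al * q \<theta> x powr l \<partial>m) = exp (- l * ln (Zr \<theta>)) * (Aa a * (1 + l * (\<theta> \<bullet> Ea a)))"
proof -
  have c: "integrable m (\<lambda>x. q a x powr al * q \<theta> x powr l) = integrable m (\<lambda>x. exp (- l * ln (Zr \<theta>)) * fa a \<theta> x)"
    by (intro Bochner_Integration.integrable_cong[OF refl]) (simp only: prod_eq[OF assms])
  show "integrable m (\<lambda>x. q a x powr al * q \<theta> x powr l)"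
    unfolding c using fa_int(1)[OF assms(2)] by simp
  have "(\<integral>x. q a x powr al * q \<theta> x powr l \<partial>m) = (\<integral>x. exp (- l * ln (Zr \<theta>)) * fa a \<theta> x \<partial>m)"
    by (intro Bochner_Integration.integral_cong[OF refl]) (simp only: prod_eq[OF assms])
  also have "\<dots> = exp (- l * ln (Zr \<theta>)) * (Aa a * (1 + l * (\<theta> \<bullet> Ea a)))"
    using fa_int[OF assms(2)] by simp
  finally show "(\<integral>x. q a x powr al * q \<theta> x powr l \<partial>m) = exp (- l * ln (Zr \<theta>)) * (Aa a * (1 + l * (\<theta> \<bullet> Ea a)))" .
qed

lemma young_neg_aux: fixes p r b :: real
  assumes "p > 0" "r > 0" "b > 1"
  shows "p powr b * r powr (1 - b) \<ge> b * p + (1 - b) * r"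
proof -
  define X where "X = p powr b * r powr (1 - b)"
  have X: "X > 0" using assms by (simp add: X_def)
  have "X powr (1/b) * r powr ((b - 1)/b) \<le> (1/b) * X + ((b - 1)/b) * r"
    using assms X by (intro Youngs_inequality_0) (auto simp: field_simps)
  moreover have "X powr (1/b) * r powr ((b - 1)/b) = p"
  proof -
    have "X powr (1/b) = p * r powr ((1 - b)/b)"
      using assms by (simp add: X_def powr_mult powr_powr)
    then show ?thesis using assms
      by (simp add: mult.assoc powr_add[symmetric] field_simps)
  qed
  ultimately have "p \<le> (1/b) * X + ((b - 1)/b) * r" by simp
  then have "b * p \<le> X + (b - 1) * r" using assms by (simp add: field_simps)
  then show ?thesis by (simp add: X_def algebra_simps)
qed

lemma young_pt: assumes "l \<noteq> 0" "a \<in> D" "\<theta> \<in> D" "x \<in> space m"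
  shows "l > 0 \<Longrightarrow> q a x powr al * q \<theta> x powr l \<le> al * q a x + l * q \<theta> x"
    "l < 0 \<Longrightarrow> q a x powr al * q \<theta> x powr l \<ge> al * q a x + l * q \<theta> x"
proof -
  consider "x \<in> S" | "x \<notin> S" by blast
  note c = this
  show "l > 0 \<Longrightarrow> q a x powr al * q \<theta> x powr l \<le> al * q a x + l * q \<theta> x"
  proof (cases rule: c)
    case 1 assume l: "l > 0"
    then show ?thesis using q_eq[OF assms(2,4)] q_eq[OF assms(3,4)] 1 al_pos
      by (intro Youngs_inequality_0) auto
  next
    case 2 assume l: "l > 0"
    then show ?thesis using q_eq[OF assms(2,4)] q_eq[OF assms(3,4)] 2 by auto
  qed
  show "l < 0 \<Longrightarrow> q a x powr al * q \<theta> x powr l \<ge> al * q a x + l * q \<theta> x"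
  proof (cases rule: c)
    case 1 assume l: "l < 0"
    then show ?thesis using q_eq[OF assms(2,4)] q_eq[OF assms(3,4)] 1
      using young_neg_aux[of "q a x" "q \<theta> x" al] by auto
  next
    case 2 assume l: "l < 0"
    then show ?thesis using q_eq[OF assms(2,4)] q_eq[OF assms(3,4)] 2 by auto
  qed
qed

lemma young_int: assumes "l \<noteq> 0" "a \<in> D" "\<theta> \<in> D"
  shows "l > 0 \<Longrightarrow> (\<integral>x. q a x powr al * q \<theta> x powr l \<partial>m) \<le> 1"
    "l < 0 \<Longrightarrow> (\<integral>x. q a x powr al * q \<theta> x powr l \<partial>m) \<ge> 1"
proof -
  have i: "integrable m (\<lambda>x. al * q a x + l * q \<theta> x)"
    using q_int(1)[OF assms(2)] q_int(1)[OF assms(3)] by auto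
  have v: "(\<integral>x. al * q a x + l * q \<theta> x \<partial>m) = 1"
    using q_int[OF assms(2)] q_int[OF assms(3)] by simp
  show "l > 0 \<Longrightarrow> (\<integral>x. q a x powr al * q \<theta> x powr l \<partial>m) \<le> 1"
    using integral_mono[OF prod_int(1)[OF assms] i young_pt(1)[OF assms]] v by simp
  show "l < 0 \<Longrightarrow> (\<integral>x. q a x powr al * q \<theta> x powr l \<partial>m) \<ge> 1"
    using integral_mono[OF i prod_int(1)[OF assms] young_pt(2)[OF assms]] v by simp
qed

lemma self_int: assumes "a \<in> D" shows "(\<integral>x. q a x powr al * q a x powr l \<partial>m) = 1"
proof -
  have "(\<integral>x. q a x powr al * q a x powr l \<partial>m) = (\<integral>x. q a x \<partial>m)"
    by (intro Bochner_Integration.integral_cong[OF refl])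
       (auto simp: powr_add[symmetric] q_nonneg powr_one)
  then show ?thesis using q_int(2)[OF assms] by simp
qed

lemma min_lem: assumes "l \<noteq> 0" "P \<in> D" "\<theta> \<in> D"
  shows "ln (Zr P) - ln (1 + l * (P \<bullet> Ea P)) / l \<le> ln (Zr \<theta>) - ln (1 + l * (\<theta> \<bullet> Ea P)) / l"
proof -
  define A where "A = Aa P"
  have A: "A > 0" using pow_int(2)[OF assms(2)] by (simp add: A_def)
  have yP: "1 + l * (P \<bullet> Ea P) > 0" using Ea_pos[OF assms(2,2)] .
  have yt: "1 + l * (\<theta> \<bullet> Ea P) > 0" using Ea_pos[OF assms(2,3)] .
  have IP: "exp (- l * ln (Zr P)) * (A * (1 + l * (P \<bullet> Ea P))) = 1"
    using prod_int(2)[OF assms(1,2,2)] self_int[OF assms(2)] by (simp add: A_def)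
  have lnIP: "- l * ln (Zr P) + ln A + ln (1 + l * (P \<bullet> Ea P)) = 0"
  proof -
    have "ln (exp (- l * ln (Zr P)) * (A * (1 + l * (P \<bullet> Ea P)))) = 0" using IP by simp
    then show ?thesis using A yP by (simp add: ln_mult)
  qed
  define I where "I = exp (- l * ln (Zr \<theta>)) * (A * (1 + l * (\<theta> \<bullet> Ea P)))"
  have I: "I = (\<integral>x. q P x powr al * q \<theta> x powr l \<partial>m)"
    using prod_int(2)[OF assms(1,2,3)] by (simp add: I_def A_def)
  have lnI: "ln I = - l * ln (Zr \<theta>) + ln A + ln (1 + l * (\<theta> \<bullet> Ea P))"
    using A yt by (simp add: I_def ln_mult)
  have Ipos: "I > 0" using A yt by (simp add: I_def)
  show ?thesis
  proof (cases "l > 0")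
    case True
    then have "I \<le> 1" using young_int(1)[OF assms(1,2,3)] I by simp
    then have "ln I \<le> 0" using Ipos by simp
    then have "- l * ln (Zr \<theta>) + ln (1 + l * (\<theta> \<bullet> Ea P)) \<le> - l * ln (Zr P) + ln (1 + l * (P \<bullet> Ea P))"
      using lnI lnIP by linarith
    then have "(- l * ln (Zr \<theta>) + ln (1 + l * (\<theta> \<bullet> Ea P))) / l \<le> (- l * ln (Zr P) + ln (1 + l * (P \<bullet> Ea P))) / l"
      using True by (simp add: divide_right_mono)
    then show ?thesis using True by (simp add: field_simps)
  next
    case False
    then have l: "l < 0" using assms(1) by simp
    then have "I \<ge> 1" using young_int(2)[OF assms(1,2,3)] I by simp
    then have "ln I \<ge> 0" using Ipos by simp
    then have "- l * ln (Zr \<theta>) + ln (1 + l * (\<theta> \<bullet> Ea P)) \<ge> - l * ln (Zr P) + ln (1 + l * (P \<bullet> Ea P))"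
      using lnI lnIP by linarith
    then have "(- l * ln (Zr \<theta>) + ln (1 + l * (\<theta> \<bullet> Ea P))) / l \<le> (- l * ln (Zr P) + ln (1 + l * (P \<bullet> Ea P))) / l"
      using l by (simp add: divide_right_mono_neg)
    then show ?thesis using l by (simp add: field_simps)
  qed
qed

lemma psi_eq: assumes "l \<noteq> 0" "a \<in> D" shows "psilam m T l a = - ln (Aa a) / l"
  using assms by (simp add: psilam_def renyi_entropy_def Aa_def)

lemma rd_eq: assumes "l \<noteq> 0" "a \<in> D" "\<theta> \<in> D"
  shows "renyi_div m al (q a) (q \<theta>) = ereal (ln (Zr \<theta>) - ln (1 + l * (\<theta> \<bullet> Ea a)) / l + psilam m T l a)"
proof -
  define I where "I = exp (- l * ln (Zr \<theta>)) * (Aa a * (1 + l * (\<theta> \<bullet> Ea a)))"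
  have A: "Aa a > 0" using pow_int(2)[OF assms(2)] .
  have yt: "1 + l * (\<theta> \<bullet> Ea a) > 0" using Ea_pos[OF assms(2,3)] .
  have Ipos: "I > 0" using A yt by (simp add: I_def)
  have nn: "(\<integral>\<^sup>+ x. ennreal (q a x powr al * q \<theta> x powr l) \<partial>m) = ennreal I"
    unfolding I_def prod_int(2)[OF assms, symmetric]
    by (rule nn_integral_eq_integral[OF prod_int(1)[OF assms]]) auto
  have lnI: "ln I = - l * ln (Zr \<theta>) + ln (Aa a) + ln (1 + l * (\<theta> \<bullet> Ea a))"
    using A yt by (simp add: I_def ln_mult)
  have "renyi_div m al (q a) (q \<theta>) = ereal (1 / (al - 1)) * ereal (ln I)"
    using assms(1) nn Ipos by (simp add: renyi_div_def elog_enn_def)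
  also have "\<dots> = ereal (ln (Zr \<theta>) - ln (1 + l * (\<theta> \<bullet> Ea a)) / l + psilam m T l a)"
    using assms(1) by (simp add: lnI psi_eq[OF assms(1,2)] field_simps)
  finally show ?thesis .
qed

lemma lnq: assumes "\<theta> \<in> D" "x \<in> space m" "1 + l * (\<theta> \<bullet> T x) > 0"
  shows "ln (q \<theta> x) = cf l \<theta> (T x) - ln (Zr \<theta>)"
  using q_eq[OF assms(1,2)] inS[OF assms(1,2)] assms(3) by simp

lemma q0: assumes "l = 0" "\<theta> \<in> D" "x \<in> space m" shows "q \<theta> x = exp (\<theta> \<bullet> T x - ln (Zr \<theta>))"
  using q_eq[OF assms(2,3)] inS[OF assms(2,3)] assms(1) by (simp add: cf_def)

lemma qT0: assumes "l = 0" "a \<in> D"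
  shows "integrable m (\<lambda>x. q a x *\<^sub>R T x)" "Ea a = (\<integral>x. q a x *\<^sub>R T x \<partial>m)"
proof -
  have al1: "1 - l = 1" using assms(1) by simp
  have e: "\<And>x. q a x powr al = q a x" by (simp only: al1 powr_one[OF q_nonneg])
  show "integrable m (\<lambda>x. q a x *\<^sub>R T x)" using compat(2)[OF assms(2)] by (simp only: e)
  have "Aa a = 1" unfolding Aa_def e using q_int(2)[OF assms(2)] .
  then show "Ea a = (\<integral>x. q a x *\<^sub>R T x \<partial>m)" using Ea_eq[OF assms(2)] by (simp add: Ba_def e)
qed

lemma lin_int: assumes "l = 0" "a \<in> D"
  shows "integrable m (\<lambda>x. q a x * (v \<bullet> T x) + c * q a x)"
    "(\<integral>x. q a x * (v \<bullet> T x) + c * q a x \<partial>m) = v \<bullet> Ea a + c"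
proof -
  have e: "\<And>x. q a x * (v \<bullet> T x) = v \<bullet> (q a x *\<^sub>R T x)" by simp
  have i1: "integrable m (\<lambda>x. v \<bullet> (q a x *\<^sub>R T x))" using qT0(1)[OF assms] by (rule integrable_inner_right)
  have i2: "integrable m (\<lambda>x. c * q a x)" using q_int(1)[OF assms(2)] by simp
  show "integrable m (\<lambda>x. q a x * (v \<bullet> T x) + c * q a x)"
    unfolding e using i1 i2 by (rule Bochner_Integration.integrable_add)
  show "(\<integral>x. q a x * (v \<bullet> T x) + c * q a x \<partial>m) = v \<bullet> Ea a + c"
    unfolding e Bochner_Integration.integral_add[OF i1 i2] integral_inner_right[OF qT0(1)[OF assms]]
       integral_mult_right_zero q_int(2)[OF assms(2)] qT0(2)[OF assms, symmetric] by simp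
qed

lemma psi0: assumes "l = 0" "a \<in> D" shows "psilam m T l a = a \<bullet> Ea a - ln (Zr a)"
proof -
  have "(\<integral>x. q a x * ln (q a x) \<partial>m) = (\<integral>x. q a x * (a \<bullet> T x) + (- ln (Zr a)) * q a x \<partial>m)"
    by (intro Bochner_Integration.integral_cong[OF refl]) (simp add: q0[OF assms] algebra_simps)
  also have "\<dots> = a \<bullet> Ea a + (- ln (Zr a))" by (rule lin_int(2)[OF assms])
  finally have "(\<integral>x. q a x * ln (q a x) \<partial>m) = a \<bullet> Ea a - ln (Zr a)" by simp
  moreover have "1 - l = 1" using assms(1) by simp
  ultimately show ?thesis by (simp add: psilam_def renyi_entropy_def)
qed

lemma kl0: assumes "l = 0" "a \<in> D" "\<theta> \<in> D"
  shows "renyi_div m al (q a) (q \<theta>) = ereal (ln (Zr \<theta>) - \<theta> \<bullet> Ea a + psilam m T l a)"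
proof -
  have "(\<integral>x. (if q a x > 0 then q a x * ln (q a x / q \<theta> x) else 0) \<partial>m)
      = (\<integral>x. q a x * ((a - \<theta>) \<bullet> T x) + (ln (Zr \<theta>) - ln (Zr a)) * q a x \<partial>m)"
    by (intro Bochner_Integration.integral_cong[OF refl])
       (simp add: q0[OF assms(1,2)] q0[OF assms(1,3)] ln_div inner_diff_left algebra_simps)
  also have "\<dots> = (a - \<theta>) \<bullet> Ea a + (ln (Zr \<theta>) - ln (Zr a))" by (rule lin_int(2)[OF assms(1,2)])
  also have "\<dots> = ln (Zr \<theta>) - \<theta> \<bullet> Ea a + psilam m T l a"
    using psi0[OF assms(1,2)] by (simp add: inner_diff_left)
  finally have k: "KL m (q a) (q \<theta>) = ereal (ln (Zr \<theta>) - \<theta> \<bullet> Ea a + psilam m T l a)"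
    by (simp add: KL_def)
  have "1 - l = 1" using assms(1) by simp
  then show ?thesis using k by (simp add: renyi_div_def)
qed

lemma min0: assumes "l = 0" "P \<in> D" "\<theta> \<in> D"
  shows "ln (Zr P) - P \<bullet> Ea P \<le> ln (Zr \<theta>) - \<theta> \<bullet> Ea P"
proof -
  have pt: "q P x - q \<theta> x \<le> q P x * ((P - \<theta>) \<bullet> T x) + (ln (Zr \<theta>) - ln (Zr P)) * q P x"
    if x: "x \<in> space m" for x
  proof -
    have p: "q P x > 0" "q \<theta> x > 0" using q0[OF assms(1,2) x] q0[OF assms(1,3) x] by auto
    have "ln (q \<theta> x / q P x) \<le> q \<theta> x / q P x - 1" using p by (intro ln_le_minus_one) simp
    then have "q P x * ln (q \<theta> x / q P x) \<le> q P x * (q \<theta> x / q P x - 1)"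
      using p by (intro mult_left_mono) auto
    also have "\<dots> = q \<theta> x - q P x" using p by (simp add: field_simps)
    also have "ln (q \<theta> x / q P x) = - ((P - \<theta>) \<bullet> T x) - (ln (Zr \<theta>) - ln (Zr P))"
      using q0[OF assms(1,2) x] q0[OF assms(1,3) x] by (simp add: ln_div inner_diff_left)
    finally show ?thesis by (simp add: algebra_simps)
  qed
  have i: "integrable m (\<lambda>x. q P x - q \<theta> x)" using q_int(1)[OF assms(2)] q_int(1)[OF assms(3)] by simp
  have "(\<integral>x. q P x - q \<theta> x \<partial>m) \<le> (\<integral>x. q P x * ((P - \<theta>) \<bullet> T x) + (ln (Zr \<theta>) - ln (Zr P)) * q P x \<partial>m)"
    by (rule integral_mono[OF i lin_int(1)[OF assms(1,2)] pt])
  then have "0 \<le> (P - \<theta>) \<bullet> Ea P + (ln (Zr \<theta>) - ln (Zr P))"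
    using q_int[OF assms(2)] q_int[OF assms(3)] q_int(1)[OF assms(2)] lin_int(2)[OF assms(1,2)] by simp
  then show ?thesis by (simp add: inner_diff_left)
qed

end

theorem proposition11:
  fixes m :: "'x measure" and T :: "'x \<Rightarrow> 'h::euclidean_space" and l :: real
    and N :: nat and x :: "nat \<Rightarrow> 'x" and \<tau> :: real and \<theta>' \<theta>P :: 'h
  defines "\<alpha> \<equiv> 1 - l"
  defines "Mv \<equiv> (real N * \<tau> / (1 + real N * \<tau>)) *\<^sub>R ((1 / real N) *\<^sub>R (\<Sum>i<N. T (x i)))
               + (1 / (1 + real N * \<tau>)) *\<^sub>R expect m (escort m \<alpha> (qlam m T l \<theta>')) T"
  defines "L \<equiv> (\<lambda>\<theta>. ereal (- (\<Sum>i<N. ln (qlam m T l \<theta> (x i))))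
               + ereal (1 / \<tau>) * renyi_div m \<alpha> (qlam m T l \<theta>') (qlam m T l \<theta>))"
  defines "U \<equiv> (\<lambda>\<theta>. ereal ((1 + real N * \<tau>) / \<tau>) * (philam m T l \<theta> - clam l \<theta> Mv)
               + ereal (1 / \<tau> * psilam m T l \<theta>'))"
  assumes alpha_pos: "\<alpha> > 0"
    and T_meas: "T \<in> borel_measurable m"
    and A: "assumption_A m T l"
    and B: "assumption_B m T l"
    and N_pos: "N > 0"
    and x_in: "\<And>i. i < N \<Longrightarrow> x i \<in> space m"
    and x_supp: "\<And>i \<theta>. i < N \<Longrightarrow> \<theta> \<in> dom_phi m T l \<Longrightarrow> x i \<in> supp m T l \<theta>"
    and tau_pos: "\<tau> > 0"
    and \<theta>'_dom: "\<theta>' \<in> dom_phi m T l"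
    and \<theta>P_dom: "\<theta>P \<in> dom_phi m T l"
    and \<theta>P_mean: "expect m (escort m \<alpha> (qlam m T l \<theta>P)) T = Mv"
  shows "(l = 0 \<longrightarrow>
            \<theta>P \<in> prox m T l (\<lambda>\<theta>. ereal (- (\<Sum>i<N. ln (qlam m T l \<theta> (x i))))) \<tau> \<theta>')
       \<and> (l \<noteq> 0 \<longrightarrow> (\<forall>\<theta> \<in> dom_phi m T l. U \<theta>P \<le> U \<theta>))
       \<and> (l < 0 \<longrightarrow> (\<forall>\<theta> \<in> dom_phi m T l. L \<theta> \<le> U \<theta>))
       \<and> (l > 0 \<longrightarrow> (\<forall>\<theta> \<in> dom_phi m T l. U \<theta> \<le> L \<theta>))"
proof -
  obtain S where S: "\<And>\<theta>. \<theta> \<in> dom_phi m T l \<Longrightarrow> supp m T l \<theta> = S"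
    using B unfolding assumption_B_def by blast
  interpret P: PS m T l S
    using T_meas A B S by unfold_locales auto
  let ?D = "dom_phi m T l"
  define E' where "E' = P.Ea \<theta>'"
  define K where "K = (1 + real N * \<tau>) / \<tau>"
  define \<psi> where "\<psi> = psilam m T l \<theta>'"
  have Npos: "real N > 0" using N_pos by simp
  have d: "1 + real N * \<tau> > 0" using tau_pos by (simp add: add_pos_nonneg)
  have Kpos: "K > 0" using d tau_pos by (simp add: K_def)
  have al: "\<alpha> = 1 - l" by (simp add: \<alpha>_def)
  have Mv: "Mv = (real N * \<tau> / (1 + real N * \<tau>)) *\<^sub>R ((1 / real N) *\<^sub>R (\<Sum>i<N. T (x i)))
               + (1 / (1 + real N * \<tau>)) *\<^sub>R E'"
    by (simp add: Mv_def E'_def P.Ea_def al)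
  have EP: "P.Ea \<theta>P = Mv" using \<theta>P_mean by (simp add: P.Ea_def al)
  have inner_Mv: "\<theta> \<bullet> Mv = (\<tau> * (\<Sum>i<N. \<theta> \<bullet> T (x i)) + \<theta> \<bullet> E') / (1 + real N * \<tau>)" for \<theta>
  proof -
    have "\<theta> \<bullet> Mv = (real N * \<tau> / (1 + real N * \<tau>)) * ((1 / real N) * (\<Sum>i<N. \<theta> \<bullet> T (x i)))
        + (1 / (1 + real N * \<tau>)) * (\<theta> \<bullet> E')"
      unfolding Mv inner_add_right inner_scaleR_right inner_sum_right ..
    also have "(real N * \<tau> / (1 + real N * \<tau>)) * ((1 / real N) * (\<Sum>i<N. \<theta> \<bullet> T (x i)))
        = \<tau> * (\<Sum>i<N. \<theta> \<bullet> T (x i)) / (1 + real N * \<tau>)"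
      using Npos by simp
    finally show ?thesis by (simp add: add_divide_distrib)
  qed
  have cfsum: "(\<Sum>i<N. cf l \<theta> (T (x i))) + cf l \<theta> E' / \<tau> - K * cf l \<theta> Mv
      = (if l = 0 then 0 else (\<tau> * (\<Sum>i<N. ln (1 + l * (\<theta> \<bullet> T (x i)))) + ln (1 + l * (\<theta> \<bullet> E'))
            - (1 + real N * \<tau>) * ln (1 + l * (\<theta> \<bullet> Mv))) / (l * \<tau>))" for \<theta>
  proof (cases "l = 0")
    case True
    have "K * (\<theta> \<bullet> Mv) = (\<tau> * (\<Sum>i<N. \<theta> \<bullet> T (x i)) + \<theta> \<bullet> E') / \<tau>"
      unfolding K_def inner_Mv using d by simp
    also have "\<dots> = (\<Sum>i<N. \<theta> \<bullet> T (x i)) + \<theta> \<bullet> E' / \<tau>"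
      using tau_pos by (simp add: add_divide_distrib)
    finally show ?thesis using True by (simp add: cf_def)
  next
    case False
    then show ?thesis using tau_pos d
      by (simp add: cf_def K_def field_simps sum_distrib_left sum_divide_distrib)
  qed
  have yi: "1 + l * (\<theta> \<bullet> T (x i)) > 0" if "\<theta> \<in> ?D" "i < N" for \<theta> i
    using x_supp[OF that(2,1)] by (simp add: supp_def)
  have y0: "1 + l * (\<theta> \<bullet> E') > 0" if "\<theta> \<in> ?D" for \<theta>
    using P.Ea_pos[OF \<theta>'_dom that] by (simp add: E'_def)
  have Yeq: "1 + l * (\<theta> \<bullet> Mv) = (\<tau> * (\<Sum>i<N. 1 + l * (\<theta> \<bullet> T (x i))) + (1 + l * (\<theta> \<bullet> E'))) / (1 + real N * \<tau>)" for \<theta>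
    unfolding inner_Mv using d
    by (simp add: sum.distrib sum_distrib_left field_simps)
  have J: "\<tau> * (\<Sum>i<N. ln (1 + l * (\<theta> \<bullet> T (x i)))) + ln (1 + l * (\<theta> \<bullet> E'))
            - (1 + real N * \<tau>) * ln (1 + l * (\<theta> \<bullet> Mv)) \<le> 0" if "\<theta> \<in> ?D" for \<theta>
    using jensen_ln[OF tau_pos _ y0[OF that] Yeq[of \<theta>]] yi[OF that] by simp
  have Ypos: "1 + l * (\<theta> \<bullet> Mv) > 0" if "\<theta> \<in> ?D" for \<theta>
  proof -
    have "(\<Sum>i<N. 1 + l * (\<theta> \<bullet> T (x i))) \<ge> 0" using yi[OF that] by (intro sum_nonneg) (simp add: less_imp_le)
    then show ?thesis unfolding Yeq using d tau_pos y0[OF that]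
      by (intro divide_pos_pos) (auto intro: add_nonneg_pos)
  qed
  have Ufact: "U \<theta> = ereal (K * (ln (P.Zr \<theta>) - cf l \<theta> Mv) + \<psi> / \<tau>)" if "\<theta> \<in> ?D" for \<theta>
    unfolding U_def K_def[symmetric] \<psi>_def[symmetric]
    by (simp add: P.philam_eq[OF that] clam_eq[OF Ypos[OF that]])
  have RD: "renyi_div m \<alpha> (qlam m T l \<theta>') (qlam m T l \<theta>) = ereal (ln (P.Zr \<theta>) - cf l \<theta> E' + \<psi>)"
    if "\<theta> \<in> ?D" for \<theta>
  proof (cases "l = 0")
    case True
    then show ?thesis using P.kl0[OF True \<theta>'_dom that] by (simp add: al cf_def E'_def \<psi>_def)
  next
    case False
    then show ?thesis using P.rd_eq[OF False \<theta>'_dom that] by (simp add: al cf_def E'_def \<psi>_def)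
  qed
  have lnsum: "(\<Sum>i<N. ln (qlam m T l \<theta> (x i))) = (\<Sum>i<N. cf l \<theta> (T (x i)) - ln (P.Zr \<theta>))"
    if "\<theta> \<in> ?D" for \<theta>
    using P.lnq[OF that x_in yi[OF that]] by (intro sum.cong) auto
  have Lfact: "L \<theta> = ereal (real N * ln (P.Zr \<theta>) - (\<Sum>i<N. cf l \<theta> (T (x i))) + (ln (P.Zr \<theta>) - cf l \<theta> E' + \<psi>) / \<tau>)"
    if "\<theta> \<in> ?D" for \<theta>
    unfolding L_def RD[OF that] lnsum[OF that] by (simp add: sum_subtractf)
  have LU: "L \<theta> - U \<theta> = ereal (- ((\<Sum>i<N. cf l \<theta> (T (x i))) + cf l \<theta> E' / \<tau> - K * cf l \<theta> Mv))"
    if "\<theta> \<in> ?D" for \<theta>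
    unfolding Lfact[OF that] Ufact[OF that] using tau_pos by (simp add: K_def field_simps)
  have Umin: "U \<theta>P \<le> U \<theta>" if "\<theta> \<in> ?D" for \<theta>
  proof -
    have "ln (P.Zr \<theta>P) - cf l \<theta>P Mv \<le> ln (P.Zr \<theta>) - cf l \<theta> Mv"
    proof (cases "l = 0")
      case True
      then show ?thesis unfolding EP[symmetric] using P.min0[OF True \<theta>P_dom that] by (simp add: cf_def)
    next
      case False
      then show ?thesis using P.min_lem[OF False \<theta>P_dom that] by (simp add: EP cf_def)
    qed
    then show ?thesis unfolding Ufact[OF that] Ufact[OF \<theta>P_dom] using Kpos by (simp add: mult_left_mono)
  qed
  have L0: "L \<theta> = U \<theta>" if "\<theta> \<in> ?D" "l = 0" for \<theta>
  proof -
    have "L \<theta> - U \<theta> = 0" using LU[OF that(1)] cfsum[of \<theta>] that(2) by simp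
    then show ?thesis using Lfact[OF that(1)] Ufact[OF that(1)] by simp
  qed
  have Lneg: "L \<theta> \<le> U \<theta>" if "\<theta> \<in> ?D" "l < 0" for \<theta>
  proof -
    have "(\<tau> * (\<Sum>i<N. ln (1 + l * (\<theta> \<bullet> T (x i)))) + ln (1 + l * (\<theta> \<bullet> E'))
            - (1 + real N * \<tau>) * ln (1 + l * (\<theta> \<bullet> Mv))) / (l * \<tau>) \<ge> 0"
      using J[OF that(1)] that(2) tau_pos by (intro divide_nonpos_neg) (auto simp: mult_neg_pos)
    then have "L \<theta> - U \<theta> \<le> 0" using LU[OF that(1)] cfsum[of \<theta>] that(2) by simp
    then show ?thesis using Lfact[OF that(1)] Ufact[OF that(1)] by simp
  qed
  have Lpos: "U \<theta> \<le> L \<theta>" if "\<theta> \<in> ?D" "l > 0" for \<theta>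
  proof -
    have "(\<tau> * (\<Sum>i<N. ln (1 + l * (\<theta> \<bullet> T (x i)))) + ln (1 + l * (\<theta> \<bullet> E'))
            - (1 + real N * \<tau>) * ln (1 + l * (\<theta> \<bullet> Mv))) / (l * \<tau>) \<le> 0"
      using J[OF that(1)] that(2) tau_pos by (intro divide_nonpos_pos) auto
    then have "L \<theta> - U \<theta> \<ge> 0" using LU[OF that(1)] cfsum[of \<theta>] that(2) by simp
    then show ?thesis using Lfact[OF that(1)] Ufact[OF that(1)] by simp
  qed
  have prox: "\<theta>P \<in> prox m T l (\<lambda>\<theta>. ereal (- (\<Sum>i<N. ln (qlam m T l \<theta> (x i))))) \<tau> \<theta>'" if "l = 0"
  proof -
    have "L \<theta>P \<le> L \<eta>" if "\<eta> \<in> ?D" for \<eta>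
      using L0[OF \<theta>P_dom \<open>l = 0\<close>] L0[OF that \<open>l = 0\<close>] Umin[OF that] by simp
    then show ?thesis using \<theta>P_dom unfolding prox_def L_def al by auto
  qed
  show ?thesis using prox Umin Lneg Lpos by auto
qed

end
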